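(* Every homothetic packing of $n\ge 3$ squares has at most $4n-8$ contacts.
   Context: Let $S=\{(x,y): -1\le x,y\le 1\}$. A homothetic packing of $n$ squares is a set $P=\{S_1,\ldots,S_n\}$ with $S_i=r_iS+p_i$, $r_i>0$, $p_i\in\mathbb{R}^2$, such that distinct squares have disjoint interiors. A contact is an unordered pair $\{i,j\}$, $i\ne j$, with $S_i\cap S_j\neq\emptyset$. *)

theory Defs
  imports "HOL-Analysis.Analysis"
begin

definition unit_square :: "(real \<times> real) set" where
  "unit_square = {(x, y). -1 \<le> x \<and> x \<le> 1 \<and> -1 \<le> y \<and> y \<le> 1}"

definition hsquare :: "real \<Rightarrow> real \<times> real \<Rightarrow> (real \<times> real) set" where
  "hsquare r p = (\<lambda>z. r *\<^sub>R z + p) ` unit_square"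

definition homothetic_packing :: "nat \<Rightarrow> (nat \<Rightarrow> real) \<Rightarrow> (nat \<Rightarrow> real \<times> real) \<Rightarrow> bool" where
  "homothetic_packing n r p \<longleftrightarrow>
     (\<forall>i<n. r i > 0) \<and>
     (\<forall>i<n. \<forall>j<n. i \<noteq> j \<longrightarrow>
        interior (hsquare (r i) (p i)) \<inter> interior (hsquare (r j) (p j)) = {})"

definition contacts :: "nat \<Rightarrow> (nat \<Rightarrow> real) \<Rightarrow> (nat \<Rightarrow> real \<times> real) \<Rightarrow> nat set set" where
  "contacts n r p = {{i, j} | i j. i < n \<and> j < n \<and> i \<noteq> j \<and>
      hsquare (r i) (p i) \<inter> hsquare (r j) (p j) \<noteq> {}}"

end

theory Submission
  imports Defs
begin
lemma line_free:
  fixes lo hi key :: "nat \<Rightarrow> real" and U S :: "(nat \<times> nat) set" and c :: real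
  assumes t: "t0 \<noteq> t1"
  and S: "S = {0..<n} \<times> {t0,t1}"
  and u0: "\<And>k. (k,t0) \<in> U \<Longrightarrow> \<exists>i<n. hi i = lo k \<and> key k \<le> key i"
  and u1: "\<And>k. (k,t1) \<in> U \<Longrightarrow> \<exists>j<n. lo j = hi k \<and> key k < key j"
  and c: "\<exists>k<n. lo k = c \<or> hi k = c"
  shows "\<exists>s\<in>S - U. (if snd s = t0 then lo (fst s) else hi (fst s)) = c"
proof -
  define K where "K = {k. k<n \<and> (lo k = c \<or> hi k = c)}"
  have fK: "finite K" unfolding K_def by auto
  have neK: "K \<noteq> {}" using c unfolding K_def by auto
  define M where "M = Max (key ` K)"
  have Mge: "\<And>k. k \<in> K \<Longrightarrow> key k \<le> M" unfolding M_def using fK by auto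
  obtain k0 where k0: "k0 \<in> K" "key k0 = M" unfolding M_def using fK neK
    by (metis (mono_tags, lifting) Max_in empty_is_image finite_imageI imageE)
  show ?thesis
  proof (cases "\<exists>k\<in>K. hi k = c \<and> key k = M")
    case True
    then obtain k where k: "k \<in> K" "hi k = c" "key k = M" by blast
    have "(k,t1) \<notin> U"
    proof
      assume "(k,t1) \<in> U"
      then obtain j where j: "j<n" "lo j = hi k" "key k < key j" using u1 by blast
      then have "j \<in> K" using k unfolding K_def by auto
      then show False using Mge j k by fastforce
    qed
    moreover have "(k,t1) \<in> S" using k S unfolding K_def by auto
    ultimately show ?thesis using k t by (intro bexI[of _ "(k,t1)"]) auto
  next
    case False
    then have lk: "lo k0 = c" using k0 unfolding K_def by auto
    have "(k0,t0) \<notin> U"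
    proof
      assume "(k0,t0) \<in> U"
      then obtain i where i: "i<n" "hi i = lo k0" "key k0 \<le> key i" using u0 by blast
      then have "i \<in> K" using lk unfolding K_def by auto
      then show False using Mge i k0 False lk by fastforce
    qed
    moreover have "(k0,t0) \<in> S" using k0 S unfolding K_def by auto
    ultimately show ?thesis using lk by (intro bexI[of _ "(k0,t0)"]) auto
  qed
qed

lemma four_free:
  fixes lo hi key :: "nat \<Rightarrow> real" and U :: "(nat \<times> nat) set"
  assumes n3: "n \<ge> 3" and t: "t0 \<noteq> t1"
  and pos: "\<And>k. k < n \<Longrightarrow> lo k < hi k"
  and sub: "U \<subseteq> {0..<n} \<times> {t0,t1}"
  and u0: "\<And>k. (k,t0) \<in> U \<Longrightarrow> \<exists>i<n. hi i = lo k \<and> key k \<le> key i"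
  and u1: "\<And>k. (k,t1) \<in> U \<Longrightarrow> \<exists>j<n. lo j = hi k \<and> key k < key j"
  shows "card U \<le> 2*n - 4"
proof -
  define S where "S = {0..<n} \<times> {t0,t1}"
  have fS: "finite S" unfolding S_def by auto
  have cardS: "card S = 2*n" unfolding S_def using t by (simp add: card_cartesian_product)
  define coord where "coord s = (if snd s = t0 then lo (fst s) else hi (fst s))" for s
  have e3: "\<And>c. (\<exists>k<n. lo k = c \<or> hi k = c) \<Longrightarrow> \<exists>s\<in>S - U. coord s = c"
    unfolding coord_def using line_free[OF t S_def u0 u1] by blast
  define x0 where "x0 = Min (lo ` {0..<n})"
  define x2 where "x2 = Max (hi ` {0..<n})"
  have ne: "{0..<n} \<noteq> {}" using n3 by auto
  have x0le: "\<And>k. k<n \<Longrightarrow> x0 \<le> lo k" unfolding x0_def by auto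
  have x2ge: "\<And>k. k<n \<Longrightarrow> hi k \<le> x2" unfolding x2_def by auto
  obtain L where L: "L<n" "lo L = x0" unfolding x0_def using ne
    by (metis (mono_tags, lifting) Max_in Min_in atLeastLessThan_iff empty_is_image finite_atLeastLessThan finite_imageI imageE)
  obtain R where R: "R<n" "hi R = x2" unfolding x2_def using ne
    by (metis (mono_tags, lifting) Max_in atLeastLessThan_iff empty_is_image finite_atLeastLessThan finite_imageI imageE)
  have eL: "\<And>k. k<n \<Longrightarrow> lo k = x0 \<Longrightarrow> (k,t0) \<in> S - U"
  proof -
    fix k assume k: "k<n" "lo k = x0"
    have "(k,t0) \<notin> U"
    proof
      assume "(k,t0) \<in> U"
      then obtain i where "i<n" "hi i = lo k" using u0 by blast
      then show False using x0le pos k by fastforce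
    qed
    then show "(k,t0) \<in> S - U" using k S_def by auto
  qed
  have eR: "\<And>k. k<n \<Longrightarrow> hi k = x2 \<Longrightarrow> (k,t1) \<in> S - U"
  proof -
    fix k assume k: "k<n" "hi k = x2"
    have "(k,t1) \<notin> U"
    proof
      assume "(k,t1) \<in> U"
      then obtain j where "j<n" "lo j = hi k" using u1 by blast
      then show False using x2ge pos k by fastforce
    qed
    then show "(k,t1) \<in> S - U" using k S_def by auto
  qed
  have cL: "coord (k,t0) = lo k" for k unfolding coord_def by simp
  have cR: "coord (k,t1) = hi k" for k unfolding coord_def using t by simp
  define mid where "mid c \<longleftrightarrow> (\<exists>k<n. lo k = c \<or> hi k = c) \<and> x0 < c \<and> c < x2" for c
  have "\<exists>E. E \<subseteq> S - U \<and> card E \<ge> 4"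
  proof (cases "\<exists>c1 c2. mid c1 \<and> mid c2 \<and> c1 < c2")
    case True
    then obtain c1 c2 where c: "mid c1" "mid c2" "c1 < c2" by blast
    obtain s1 where s1: "s1 \<in> S - U" "coord s1 = c1" using e3 c unfolding mid_def by blast
    obtain s2 where s2: "s2 \<in> S - U" "coord s2 = c2" using e3 c unfolding mid_def by blast
    have d: "coord (L,t0) = x0" "coord (R,t1) = x2" using cL cR L R by auto
    have "card {(L,t0), s1, s2, (R,t1)} = 4"
      using c s1 s2 d unfolding mid_def by (auto simp: card_insert_if)
    moreover have "{(L,t0), s1, s2, (R,t1)} \<subseteq> S - U" using s1 s2 eL eR L R by auto
    ultimately show ?thesis by (intro exI[of _ "{(L,t0), s1, s2, (R,t1)}"]) auto
  next
    case False
    have ext: "lo k = x0 \<or> hi k = x2" if k: "k<n" for k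
    proof (rule ccontr)
      assume a: "\<not> (lo k = x0 \<or> hi k = x2)"
      have "mid (lo k)" "mid (hi k)" unfolding mid_def using a k x0le x2ge pos[OF k]
        by (metis less_eq_real_def order.strict_trans1 order.strict_trans2)+
      then show False using False pos[OF k] by blast
    qed
    define sd where "sd k = (if lo k = x0 then (k,t0) else (k,t1))" for k
    have sdin: "sd k \<in> S - U" "coord (sd k) = x0 \<or> coord (sd k) = x2" if "k<n" for k
      using ext[OF that] eL eR that cL cR unfolding sd_def by auto
    have sdfst: "fst (sd k) = k" for k unfolding sd_def by auto
    have d3: "sd 0 \<noteq> sd 1" "sd 0 \<noteq> sd 2" "sd 1 \<noteq> sd 2" by (auto dest!: arg_cong[where f=fst] simp: sdfst)
    show ?thesis
    proof (cases "\<exists>c. mid c")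
      case True
      then obtain c where c: "mid c" by blast
      obtain s where s: "s \<in> S - U" "coord s = c" using e3 c unfolding mid_def by blast
      have "s \<noteq> sd k" if "k<n" for k using sdin[OF that] s c unfolding mid_def by auto
      then have "card {s, sd 0, sd 1, sd 2} = 4" using d3 n3 by auto
      moreover have "{s, sd 0, sd 1, sd 2} \<subseteq> S - U" using s sdin n3 by auto
      ultimately show ?thesis by (intro exI[of _ "{s, sd 0, sd 1, sd 2}"]) auto
    next
      case nm: False
      have both: "lo k = x0 \<and> hi k = x2" if k: "k<n" for k
      proof -
        have "\<not> mid (lo k)" "\<not> mid (hi k)" using nm by auto
        then show ?thesis unfolding mid_def using k x0le x2ge pos[OF k]
          by (metis less_eq_real_def order.strict_trans1 order.strict_trans2)
      qed
      have "card {(0::nat,t0),(0,t1),(1,t0),(1,t1)} = 4" using t by auto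
      moreover have "{(0::nat,t0),(0,t1),(1,t0),(1,t1)} \<subseteq> S - U" using both eL eR n3 by auto
      ultimately show ?thesis by (intro exI[of _ "{(0::nat,t0),(0,t1),(1,t0),(1,t1)}"]) auto
    qed
  qed
  then obtain E where E: "E \<subseteq> S - U" "card E \<ge> 4" by blast
  have "U \<subseteq> S - E" using E sub S_def by auto
  then have "card U \<le> card (S - E)" using fS by (simp add: card_mono)
  also have "\<dots> = card S - card E" using E fS by (meson card_Diff_subset Diff_subset finite_subset subset_trans)
  finally show ?thesis using cardS E by linarith
qed

lemma hsquare_box:
  assumes "r > 0"
  shows "hsquare r p = {fst p - r..fst p + r} \<times> {snd p - r..snd p + r}"
proof
  show "hsquare r p \<subseteq> {fst p - r..fst p + r} \<times> {snd p - r..snd p + r}"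
  proof
    fix z assume "z \<in> hsquare r p"
    then obtain x y where xy: "-1 \<le> x" "x \<le> 1" "-1 \<le> y" "y \<le> 1" "z = r *\<^sub>R (x,y) + p"
      unfolding hsquare_def unit_square_def by auto
    have "r * x \<le> r * 1" "r * (-1) \<le> r * x" "r * y \<le> r * 1" "r * (-1) \<le> r * y"
      using xy assms by (intro mult_left_mono; simp)+
    then have "r * x \<le> r" "- r \<le> r * x" "r * y \<le> r" "- r \<le> r * y" by simp_all
    then show "z \<in> {fst p - r..fst p + r} \<times> {snd p - r..snd p + r}" using xy
      by (cases p) auto
  qed
next
  show "{fst p - r..fst p + r} \<times> {snd p - r..snd p + r} \<subseteq> hsquare r p"
  proof
    fix z assume z: "z \<in> {fst p - r..fst p + r} \<times> {snd p - r..snd p + r}"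
    obtain u v where uv: "z = (u,v)" by (cases z)
    define x where "x = (u - fst p) / r"
    define y where "y = (v - snd p) / r"
    have "-1 \<le> x \<and> x \<le> 1 \<and> -1 \<le> y \<and> y \<le> 1" using z uv assms
      unfolding x_def y_def by (auto simp: field_simps)
    moreover have "z = r *\<^sub>R (x,y) + p" using assms uv unfolding x_def y_def
      by (cases p) (auto simp: field_simps)
    ultimately show "z \<in> hsquare r p" unfolding hsquare_def unit_square_def
      by (intro image_eqI[of _ _ "(x,y)"]) auto
  qed
qed

lemma interior_hsquare:
  assumes "r > 0"
  shows "interior (hsquare r p) = {fst p - r<..<fst p + r} \<times> {snd p - r<..<snd p + r}"
  using assms by (simp add: hsquare_box interior_Times)

lemma open_int_disj:
  fixes a b c d :: real
  assumes "a < b" "c < d" "{a<..<b} \<inter> {c<..<d} = {}"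
  shows "b \<le> c \<or> d \<le> a"
proof (rule ccontr)
  assume "\<not> (b \<le> c \<or> d \<le> a)"
  then have "(max a c + min b d)/2 \<in> {a<..<b} \<inter> {c<..<d}" using assms(1,2) by auto
  then show False using assms(3) by blast
qed

lemma box_disj:
  fixes a b c d a' b' c' d' :: real
  assumes "a < b" "c < d" "a' < b'" "c' < d'"
    "({a<..<b} \<times> {c<..<d}) \<inter> ({a'<..<b'} \<times> {c'<..<d'}) = {}"
  shows "b \<le> a' \<or> b' \<le> a \<or> d \<le> c' \<or> d' \<le> c"
proof -
  have "({a<..<b} \<inter> {a'<..<b'}) \<times> ({c<..<d} \<inter> {c'<..<d'}) = {}"
    using assms(5) by (simp add: Times_Int_Times)
  then have "{a<..<b} \<inter> {a'<..<b'} = {} \<or> {c<..<d} \<inter> {c'<..<d'} = {}" by blast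
  then show ?thesis using open_int_disj assms(1-4) by blast
qed

theorem proposition13:
  fixes n :: nat and r :: "nat \<Rightarrow> real" and p :: "nat \<Rightarrow> real \<times> real"
  assumes "n \<ge> 3" and "homothetic_packing n r p"
  shows "card (contacts n r p) \<le> 4 * n - 8"
proof -
  define lo where "lo i = fst (p i) - r i" for i
  define hi where "hi i = fst (p i) + r i" for i
  define bo where "bo i = snd (p i) - r i" for i
  define tp where "tp i = snd (p i) + r i" for i
  have rpos: "\<And>i. i<n \<Longrightarrow> r i > 0" using assms(2) unfolding homothetic_packing_def by auto
  have lh: "\<And>i. i<n \<Longrightarrow> lo i < hi i" and bt: "\<And>i. i<n \<Longrightarrow> bo i < tp i"
    using rpos unfolding lo_def hi_def bo_def tp_def by force+
  have disj: "hi i \<le> lo j \<or> hi j \<le> lo i \<or> tp i \<le> bo j \<or> tp j \<le> bo i"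
    if "i<n" "j<n" "i\<noteq>j" for i j
  proof -
    have "interior (hsquare (r i) (p i)) \<inter> interior (hsquare (r j) (p j)) = {}"
      using assms(2) that unfolding homothetic_packing_def by auto
    then show ?thesis using box_disj[of "lo i" "hi i" "bo i" "tp i" "lo j" "hi j" "bo j" "tp j"]
      lh bt that interior_hsquare rpos unfolding lo_def hi_def bo_def tp_def by auto
  qed
  have cont: "lo i \<le> hi j \<and> lo j \<le> hi i \<and> bo i \<le> tp j \<and> bo j \<le> tp i"
    if "i<n" "j<n" "hsquare (r i) (p i) \<inter> hsquare (r j) (p j) \<noteq> {}" for i j
    using that hsquare_box rpos unfolding lo_def hi_def bo_def tp_def by auto
  define Hc where "Hc i j \<longleftrightarrow> hi i = lo j \<and> bo j \<le> tp i \<and> bo i < tp j" for i j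
  define Vc where "Vc i j \<longleftrightarrow> tp i = bo j \<and> lo j < hi i \<and> lo i \<le> hi j" for i j
  define asg where "asg i j s \<longleftrightarrow> i<n \<and> j<n \<and> i\<noteq>j \<and>
     ((Hc i j \<and> s = (if tp i < tp j then (i,1::nat) else (j,0))) \<or>
      (Vc i j \<and> s = (if lo j < lo i then (i,3) else (j,2))))" for i j s
  define C where "C = contacts n r p"
  have ex: "\<exists>s i j. e = {i,j} \<and> asg i j s" if eC: "e \<in> C" for e
  proof -
    obtain i j where ij: "e = {i,j}" "i<n" "j<n" "i\<noteq>j"
      "hsquare (r i) (p i) \<inter> hsquare (r j) (p j) \<noteq> {}"
      using eC unfolding C_def contacts_def by blast
    have c: "lo i \<le> hi j \<and> lo j \<le> hi i \<and> bo i \<le> tp j \<and> bo j \<le> tp i"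
      using cont ij by blast
    have d: "hi i \<le> lo j \<or> hi j \<le> lo i \<or> tp i \<le> bo j \<or> tp j \<le> bo i"
      using disj ij by blast
    have "Hc i j \<or> Hc j i \<or> Vc i j \<or> Vc j i"
      using c d lh[OF ij(2)] lh[OF ij(3)] bt[OF ij(2)] bt[OF ij(3)]
      unfolding Hc_def Vc_def by linarith
    moreover have "{i,j} = {j,i}" by blast
    ultimately show ?thesis using ij unfolding asg_def by metis
  qed
  have uniq: "{i,j} = {i',j'}" if "asg i j s" "asg i' j' s" for i j i' j' s
  proof -
    have n: "i<n" "j<n" "i'<n" "j'<n" using that unfolding asg_def by auto
    have dj: "j \<noteq> j' \<Longrightarrow> hi j \<le> lo j' \<or> hi j' \<le> lo j \<or> tp j \<le> bo j' \<or> tp j' \<le> bo j"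
      using disj n by blast
    have di: "i \<noteq> i' \<Longrightarrow> hi i \<le> lo i' \<or> hi i' \<le> lo i \<or> tp i \<le> bo i' \<or> tp i' \<le> bo i"
      using disj n by blast
    show ?thesis
      using that dj di lh[OF n(1)] lh[OF n(2)] lh[OF n(3)] lh[OF n(4)]
        bt[OF n(1)] bt[OF n(2)] bt[OF n(3)] bt[OF n(4)]
      unfolding asg_def Hc_def Vc_def by (auto split: if_splits) blast+
  qed
  define F where "F e = (SOME s. \<exists>i j. e = {i,j} \<and> asg i j s)" for e
  have Fp: "\<exists>i j. e = {i,j} \<and> asg i j (F e)" if "e \<in> C" for e
    using ex[OF that] unfolding F_def by (rule someI_ex)
  have inj: "inj_on F C"
  proof (rule inj_onI)
    fix e1 e2 assume "e1 \<in> C" "e2 \<in> C" "F e1 = F e2"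
    then show "e1 = e2" using Fp uniq by metis
  qed
  define U where "U = F ` C"
  have cardC: "card C = card U" unfolding U_def using inj by (simp add: card_image)
  have Ua: "\<exists>i j. asg i j s" if "s \<in> U" for s
    using that Fp unfolding U_def by blast
  have Usub: "U \<subseteq> {0..<n} \<times> {0,1,2,3}"
  proof
    fix s assume "s \<in> U"
    then obtain i j where "asg i j s" using Ua by blast
    then show "s \<in> {0..<n} \<times> {0,1,2,3}" unfolding asg_def by (auto split: if_splits)
  qed
  define UH where "UH = U \<inter> (UNIV \<times> {0,1})"
  define UV where "UV = U \<inter> (UNIV \<times> {2,3})"
  have fU: "finite U" using Usub finite_subset by blast
  have "U = UH \<union> UV" using Usub unfolding UH_def UV_def by auto
  then have "card U \<le> card UH + card UV" by (metis card_Un_le)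
  moreover have "card UH \<le> 2*n - 4"
  proof (rule four_free[where lo=lo and hi=hi and key=tp])
    show "UH \<subseteq> {0..<n} \<times> {0,1}" using Usub UH_def by auto
    show "\<exists>i<n. hi i = lo k \<and> tp k \<le> tp i" if "(k,0) \<in> UH" for k
      using Ua[of "(k,0)"] that unfolding UH_def asg_def Hc_def by (auto split: if_splits)
    show "\<exists>j<n. lo j = hi k \<and> tp k < tp j" if "(k,1) \<in> UH" for k
      using Ua[of "(k,1)"] that unfolding UH_def asg_def Hc_def by (auto split: if_splits)
  qed (use assms lh in auto)
  moreover have "card UV \<le> 2*n - 4"
  proof (rule four_free[where lo=bo and hi=tp and key="\<lambda>k. - lo k"])
    show "UV \<subseteq> {0..<n} \<times> {2,3}" using Usub UV_def by auto
    show "\<exists>i<n. tp i = bo k \<and> - lo k \<le> - lo i" if "(k,2) \<in> UV" for k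
      using Ua[of "(k,2)"] that unfolding UV_def asg_def Vc_def by (auto split: if_splits)
    show "\<exists>j<n. bo j = tp k \<and> - lo k < - lo j" if "(k,3) \<in> UV" for k
      using Ua[of "(k,3)"] that unfolding UV_def asg_def Vc_def by (auto split: if_splits)
  qed (use assms bt in auto)
  ultimately show ?thesis unfolding C_def[symmetric] using cardC by linarith
qed

end
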